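(* Let $\mathcal E$ be an exact category and $\Phi:\operatorname{Serre}(\mathcal E)\to\operatorname{MSpec}\mathsf M(\mathcal E)$, $\Phi(\mathcal S)=\mathsf M(\mathcal E)\setminus\mathsf M_{\mathcal S}$ where $\mathsf M_{\mathcal S}=\{[X]\mid X\in\mathcal S\}$. Then: (1) $\Phi$ is a homeomorphism for the Zariski topologies; (2) the sets $U_X=\{\mathcal S\in\operatorname{Serre}(\mathcal E)\mid X\in\mathcal S\}$, $X\in\mathcal E$, form an open basis of $\operatorname{Serre}(\mathcal E)$; (3) for $\mathcal S,\mathcal T\in\operatorname{Serre}(\mathcal E)$, $\mathcal S$ lies in the closure of $\{\mathcal T\}$ if and only if $\mathcal S\subseteq\mathcal T$, i.e. the specialization order on $\operatorname{Serre}(\mathcal E)$ is inclusion.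
   Context: An exact category $\mathcal E$ is an additive full subcategory of an abelian category closed under extensions; conflations are short exact sequences with all terms in $\mathcal E$. The Grothendieck monoid $\mathsf M(\mathcal E)$ is the commutative monoid with a map $X\mapsto[X]$ on isomorphism classes with $[0]=0$ and $[Y]=[X]+[Z]$ for each conflation $0\to X\to Y\to Z\to 0$, universal among such maps. A Serre subcategory is a full additive subcategory $\mathcal S$ closed under isomorphisms such that for each conflation, $Y\in\mathcal S$ iff $X,Z\in\mathcal S$. A prime ideal of a monoid $M$ is a subset $\mathfrak p\ne M$ with $x+a\in\mathfrak p$ for $x\in\mathfrak p$, $a\in M$, and $x+y\in\mathfrak p\Rightarrow x\in\mathfrak p$ or $y\in\mathfrak p$. Zariski topology on $\operatorname{MSpec}M$: closed sets $V(S)=\{\mathfrak p\mid\mathfrak p\supseteq S\}$, $S\subseteq M$. Zariski topology on $\operatorname{Serre}(\mathcal E)$: closed sets $V(\mathcal X)=\{\mathcal S\mid\mathcal S\cap\mathcal X=\emptyset\}$ for subcategories (classes of objects closed under isomorphism) $\mathcal X\subseteq\mathcal E$. *)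

theory Defs
  imports "HOL-Analysis.Analysis" "HOL-Library.Multiset"
begin

record ('o, 'a) cat =
  Obj  :: "'o set"
  Arr  :: "'a set"
  Dom  :: "'a \<Rightarrow> 'o"
  Cod  :: "'a \<Rightarrow> 'o"
  Comp :: "'a \<Rightarrow> 'a \<Rightarrow> 'a"   (* Comp C g f = g \<circ> f *)
  Idm  :: "'o \<Rightarrow> 'a"

definition hom :: "('o,'a) cat \<Rightarrow> 'o \<Rightarrow> 'o \<Rightarrow> 'a set" where
  "hom C X Y = {f \<in> Arr C. Dom C f = X \<and> Cod C f = Y}"

definition is_category :: "('o,'a) cat \<Rightarrow> bool" where
  "is_category C \<longleftrightarrow>
     (\<forall>f\<in>Arr C. Dom C f \<in> Obj C \<and> Cod C f \<in> Obj C) \<and>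
     (\<forall>X\<in>Obj C. Idm C X \<in> hom C X X) \<and>
     (\<forall>f\<in>Arr C. \<forall>g\<in>Arr C. Cod C f = Dom C g \<longrightarrow> Comp C g f \<in> hom C (Dom C f) (Cod C g)) \<and>
     (\<forall>f\<in>Arr C. Comp C (Idm C (Cod C f)) f = f \<and> Comp C f (Idm C (Dom C f)) = f) \<and>
     (\<forall>f\<in>Arr C. \<forall>g\<in>Arr C. \<forall>h\<in>Arr C. Cod C f = Dom C g \<and> Cod C g = Dom C h \<longrightarrow>
        Comp C h (Comp C g f) = Comp C (Comp C h g) f)"

definition is_mono :: "('o,'a) cat \<Rightarrow> 'a \<Rightarrow> bool" where
  "is_mono C f \<longleftrightarrow> f \<in> Arr C \<and>
     (\<forall>g\<in>Arr C. \<forall>h\<in>Arr C. Cod C g = Dom C f \<and> Cod C h = Dom C f \<and> Dom C g = Dom C h \<and>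
        Comp C f g = Comp C f h \<longrightarrow> g = h)"

definition is_epi :: "('o,'a) cat \<Rightarrow> 'a \<Rightarrow> bool" where
  "is_epi C f \<longleftrightarrow> f \<in> Arr C \<and>
     (\<forall>g\<in>Arr C. \<forall>h\<in>Arr C. Dom C g = Cod C f \<and> Dom C h = Cod C f \<and> Cod C g = Cod C h \<and>
        Comp C g f = Comp C h f \<longrightarrow> g = h)"

definition is_iso :: "('o,'a) cat \<Rightarrow> 'a \<Rightarrow> bool" where
  "is_iso C f \<longleftrightarrow> f \<in> Arr C \<and> (\<exists>g \<in> hom C (Cod C f) (Dom C f).
      Comp C g f = Idm C (Dom C f) \<and> Comp C f g = Idm C (Cod C f))"

definition isomorphic :: "('o,'a) cat \<Rightarrow> 'o \<Rightarrow> 'o \<Rightarrow> bool" where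
  "isomorphic C X Y \<longleftrightarrow> (\<exists>f \<in> hom C X Y. is_iso C f)"

definition zero_obj :: "('o,'a) cat \<Rightarrow> 'o \<Rightarrow> bool" where
  "zero_obj C Z \<longleftrightarrow> Z \<in> Obj C \<and>
     (\<forall>X\<in>Obj C. (\<exists>!f. f \<in> hom C Z X) \<and> (\<exists>!f. f \<in> hom C X Z))"

definition zero_arr :: "('o,'a) cat \<Rightarrow> 'a \<Rightarrow> bool" where
  "zero_arr C f \<longleftrightarrow> f \<in> Arr C \<and> (\<exists>Z. zero_obj C Z \<and>
     (\<exists>g \<in> hom C (Dom C f) Z. \<exists>h \<in> hom C Z (Cod C f). f = Comp C h g))"

definition is_kernel :: "('o,'a) cat \<Rightarrow> 'a \<Rightarrow> 'a \<Rightarrow> bool" where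
  "is_kernel C k f \<longleftrightarrow> k \<in> Arr C \<and> f \<in> Arr C \<and> Cod C k = Dom C f \<and>
     zero_arr C (Comp C f k) \<and>
     (\<forall>g\<in>Arr C. Cod C g = Dom C f \<and> zero_arr C (Comp C f g) \<longrightarrow>
        (\<exists>!u. u \<in> hom C (Dom C g) (Dom C k) \<and> Comp C k u = g))"

definition is_cokernel :: "('o,'a) cat \<Rightarrow> 'a \<Rightarrow> 'a \<Rightarrow> bool" where
  "is_cokernel C c f \<longleftrightarrow> c \<in> Arr C \<and> f \<in> Arr C \<and> Dom C c = Cod C f \<and>
     zero_arr C (Comp C c f) \<and>
     (\<forall>g\<in>Arr C. Dom C g = Cod C f \<and> zero_arr C (Comp C g f) \<longrightarrow>
        (\<exists>!u. u \<in> hom C (Cod C c) (Cod C g) \<and> Comp C u c = g))"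

definition is_product :: "('o,'a) cat \<Rightarrow> 'o \<Rightarrow> 'o \<Rightarrow> 'o \<Rightarrow> 'a \<Rightarrow> 'a \<Rightarrow> bool" where
  "is_product C X Y P p1 p2 \<longleftrightarrow> p1 \<in> hom C P X \<and> p2 \<in> hom C P Y \<and>
     (\<forall>W\<in>Obj C. \<forall>f\<in>hom C W X. \<forall>g\<in>hom C W Y.
        (\<exists>!u. u \<in> hom C W P \<and> Comp C p1 u = f \<and> Comp C p2 u = g))"

definition is_coproduct :: "('o,'a) cat \<Rightarrow> 'o \<Rightarrow> 'o \<Rightarrow> 'o \<Rightarrow> 'a \<Rightarrow> 'a \<Rightarrow> bool" where
  "is_coproduct C X Y P i1 i2 \<longleftrightarrow> i1 \<in> hom C X P \<and> i2 \<in> hom C Y P \<and>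
     (\<forall>W\<in>Obj C. \<forall>f\<in>hom C X W. \<forall>g\<in>hom C Y W.
        (\<exists>!u. u \<in> hom C P W \<and> Comp C u i1 = f \<and> Comp C u i2 = g))"

text \<open>Abelian category (Freyd's definition, no additive structure assumed a priori):
  zero object, binary products and coproducts, kernels and cokernels,
  every mono is a kernel and every epi is a cokernel.\<close>
definition abelian :: "('o,'a) cat \<Rightarrow> bool" where
  "abelian C \<longleftrightarrow> is_category C \<and> (\<exists>Z. zero_obj C Z) \<and>
     (\<forall>X\<in>Obj C. \<forall>Y\<in>Obj C. \<exists>P p1 p2. is_product C X Y P p1 p2) \<and>
     (\<forall>X\<in>Obj C. \<forall>Y\<in>Obj C. \<exists>P i1 i2. is_coproduct C X Y P i1 i2) \<and>
     (\<forall>f\<in>Arr C. \<exists>k. is_kernel C k f) \<and>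
     (\<forall>f\<in>Arr C. \<exists>c. is_cokernel C c f) \<and>
     (\<forall>f. is_mono C f \<longrightarrow> (\<exists>g. is_kernel C f g)) \<and>
     (\<forall>f. is_epi C f \<longrightarrow> (\<exists>g. is_cokernel C f g))"

definition short_exact :: "('o,'a) cat \<Rightarrow> 'o \<Rightarrow> 'o \<Rightarrow> 'o \<Rightarrow> bool" where
  "short_exact C X Y Z \<longleftrightarrow> (\<exists>f \<in> hom C X Y. \<exists>g \<in> hom C Y Z.
      is_kernel C f g \<and> is_cokernel C g f)"

text \<open>E (a class of objects of the abelian category C, viewed as a full subcategory) is
  an additive full subcategory closed under extensions.\<close>
definition exact_cat :: "('o,'a) cat \<Rightarrow> 'o set \<Rightarrow> bool" where
  "exact_cat C E \<longleftrightarrow> abelian C \<and> E \<subseteq> Obj C \<and>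
     (\<exists>Z\<in>E. zero_obj C Z) \<and>
     (\<forall>X\<in>E. \<forall>Y\<in>E. \<exists>P\<in>E. \<exists>p1 p2. is_product C X Y P p1 p2) \<and>
     (\<forall>X Y Z. short_exact C X Y Z \<and> X \<in> E \<and> Z \<in> E \<longrightarrow> Y \<in> E)"

definition conflation :: "('o,'a) cat \<Rightarrow> 'o set \<Rightarrow> 'o \<Rightarrow> 'o \<Rightarrow> 'o \<Rightarrow> bool" where
  "conflation C E X Y Z \<longleftrightarrow> X \<in> E \<and> Y \<in> E \<and> Z \<in> E \<and> short_exact C X Y Z"

definition serre :: "('o,'a) cat \<Rightarrow> 'o set \<Rightarrow> 'o set \<Rightarrow> bool" where
  "serre C E S \<longleftrightarrow> S \<subseteq> E \<and>
     (\<forall>X\<in>S. \<forall>Y\<in>E. isomorphic C X Y \<longrightarrow> Y \<in> S) \<and>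
     (\<exists>Z\<in>S. zero_obj C Z) \<and>
     (\<forall>X\<in>S. \<forall>Y\<in>S. \<forall>P\<in>E. (\<exists>p1 p2. is_product C X Y P p1 p2) \<longrightarrow> P \<in> S) \<and>
     (\<forall>X Y Z. conflation C E X Y Z \<longrightarrow> (Y \<in> S \<longleftrightarrow> X \<in> S \<and> Z \<in> S))"

definition Serre :: "('o,'a) cat \<Rightarrow> 'o set \<Rightarrow> 'o set set" where
  "Serre C E = {S. serre C E S}"

definition iso_closed :: "('o,'a) cat \<Rightarrow> 'o set \<Rightarrow> 'o set \<Rightarrow> bool" where
  "iso_closed C E X \<longleftrightarrow> X \<subseteq> E \<and> (\<forall>A\<in>X. \<forall>B\<in>E. isomorphic C A B \<longrightarrow> B \<in> X)"

definition serre_V :: "('o,'a) cat \<Rightarrow> 'o set \<Rightarrow> 'o set \<Rightarrow> 'o set set" where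
  "serre_V C E X = {S \<in> Serre C E. S \<inter> X = {}}"

definition serre_zariski :: "('o,'a) cat \<Rightarrow> 'o set \<Rightarrow> 'o set topology" where
  "serre_zariski C E = topology (\<lambda>U. \<exists>X. iso_closed C E X \<and> U = Serre C E - serre_V C E X)"

definition U_obj :: "('o,'a) cat \<Rightarrow> 'o set \<Rightarrow> 'o \<Rightarrow> 'o set set" where
  "U_obj C E X = {S \<in> Serre C E. X \<in> S}"

text \<open>M(E) is presented as finite formal sums (multisets) of objects of E modulo the
  smallest congruence identifying isomorphic objects, [0] = 0 for zero objects and
  [Y] = [X] + [Z] for conflations.\<close>
inductive groth_rel :: "('o,'a) cat \<Rightarrow> 'o set \<Rightarrow> 'o multiset \<Rightarrow> 'o multiset \<Rightarrow> bool"
  for C E where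
  gr_refl:  "set_mset A \<subseteq> E \<Longrightarrow> groth_rel C E A A"
| gr_sym:   "groth_rel C E A B \<Longrightarrow> groth_rel C E B A"
| gr_trans: "groth_rel C E A B \<Longrightarrow> groth_rel C E B D \<Longrightarrow> groth_rel C E A D"
| gr_add:   "groth_rel C E A B \<Longrightarrow> set_mset D \<subseteq> E \<Longrightarrow> groth_rel C E (A + D) (B + D)"
| gr_iso:   "X \<in> E \<Longrightarrow> Y \<in> E \<Longrightarrow> isomorphic C X Y \<Longrightarrow> groth_rel C E {#X#} {#Y#}"
| gr_zero:  "Z \<in> E \<Longrightarrow> zero_obj C Z \<Longrightarrow> groth_rel C E {#Z#} {#}"
| gr_conf:  "conflation C E X Y Z \<Longrightarrow> groth_rel C E {#Y#} {#X, Z#}"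

definition groth_class :: "('o,'a) cat \<Rightarrow> 'o set \<Rightarrow> 'o multiset \<Rightarrow> 'o multiset set" where
  "groth_class C E A = {B. groth_rel C E A B}"

definition GM :: "('o,'a) cat \<Rightarrow> 'o set \<Rightarrow> 'o multiset set set" where
  "GM C E = groth_class C E ` {A. set_mset A \<subseteq> E}"

definition GM_add :: "('o,'a) cat \<Rightarrow> 'o set \<Rightarrow> 'o multiset set \<Rightarrow> 'o multiset set \<Rightarrow> 'o multiset set" where
  "GM_add C E a b = {D. \<exists>A\<in>a. \<exists>B\<in>b. groth_rel C E (A + B) D}"

definition gcls :: "('o,'a) cat \<Rightarrow> 'o set \<Rightarrow> 'o \<Rightarrow> 'o multiset set" where
  "gcls C E X = groth_class C E {#X#}"

definition prime_ideal :: "'m set \<Rightarrow> ('m \<Rightarrow> 'm \<Rightarrow> 'm) \<Rightarrow> 'm set \<Rightarrow> bool" where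
  "prime_ideal M add p \<longleftrightarrow> p \<subseteq> M \<and> p \<noteq> M \<and>
     (\<forall>x\<in>p. \<forall>a\<in>M. add x a \<in> p) \<and>
     (\<forall>x\<in>M. \<forall>y\<in>M. add x y \<in> p \<longrightarrow> x \<in> p \<or> y \<in> p)"

definition MSpec :: "'m set \<Rightarrow> ('m \<Rightarrow> 'm \<Rightarrow> 'm) \<Rightarrow> 'm set set" where
  "MSpec M add = {p. prime_ideal M add p}"

definition mspec_V :: "'m set \<Rightarrow> ('m \<Rightarrow> 'm \<Rightarrow> 'm) \<Rightarrow> 'm set \<Rightarrow> 'm set set" where
  "mspec_V M add S = {p \<in> MSpec M add. S \<subseteq> p}"

definition mspec_zariski :: "'m set \<Rightarrow> ('m \<Rightarrow> 'm \<Rightarrow> 'm) \<Rightarrow> 'm set topology" where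
  "mspec_zariski M add = topology (\<lambda>U. \<exists>S \<subseteq> M. U = MSpec M add - mspec_V M add S)"

definition Phi :: "('o,'a) cat \<Rightarrow> 'o set \<Rightarrow> 'o set \<Rightarrow> 'o multiset set set" where
  "Phi C E S = GM C E - gcls C E ` S"

end

theory Submission
  imports Defs
begin


context fixes C :: "('o,'a) cat" assumes cat: "is_category C" begin

lemma dc: "f \<in> Arr C \<Longrightarrow> Dom C f \<in> Obj C \<and> Cod C f \<in> Obj C"
  using cat unfolding is_category_def by blast
lemma idm: "X \<in> Obj C \<Longrightarrow> Idm C X \<in> hom C X X"
  using cat unfolding is_category_def by blast
lemma comp: "f \<in> Arr C \<Longrightarrow> g \<in> Arr C \<Longrightarrow> Cod C f = Dom C g \<Longrightarrow> Comp C g f \<in> hom C (Dom C f) (Cod C g)"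
  using cat unfolding is_category_def by blast
lemma idl: "f \<in> Arr C \<Longrightarrow> Comp C (Idm C (Cod C f)) f = f"
  using cat unfolding is_category_def by blast
lemma idr: "f \<in> Arr C \<Longrightarrow> Comp C f (Idm C (Dom C f)) = f"
  using cat unfolding is_category_def by blast
lemma assoc: "f \<in> Arr C \<Longrightarrow> g \<in> Arr C \<Longrightarrow> h \<in> Arr C \<Longrightarrow> Cod C f = Dom C g \<Longrightarrow> Cod C g = Dom C h \<Longrightarrow>
        Comp C h (Comp C g f) = Comp C (Comp C h g) f"
  using cat unfolding is_category_def by blast

lemma homI: "f \<in> hom C X Y \<longleftrightarrow> f \<in> Arr C \<and> Dom C f = X \<and> Cod C f = Y"
  by (simp add: hom_def)

lemma comph: "f \<in> hom C X Y \<Longrightarrow> g \<in> hom C Y Z \<Longrightarrow> Comp C g f \<in> hom C X Z"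
  using comp by (auto simp: hom_def)

lemma zero_unique_from: "zero_obj C Z \<Longrightarrow> X \<in> Obj C \<Longrightarrow> f \<in> hom C Z X \<Longrightarrow> g \<in> hom C Z X \<Longrightarrow> f = g"
  unfolding zero_obj_def by blast
lemma zero_unique_to: "zero_obj C Z \<Longrightarrow> X \<in> Obj C \<Longrightarrow> f \<in> hom C X Z \<Longrightarrow> g \<in> hom C X Z \<Longrightarrow> f = g"
  unfolding zero_obj_def by blast
lemma zero_ex_from: "zero_obj C Z \<Longrightarrow> X \<in> Obj C \<Longrightarrow> \<exists>f. f \<in> hom C Z X"
  unfolding zero_obj_def by blast
lemma zero_ex_to: "zero_obj C Z \<Longrightarrow> X \<in> Obj C \<Longrightarrow> \<exists>f. f \<in> hom C X Z"
  unfolding zero_obj_def by blast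

lemma zero_arr_unique:
  assumes f: "zero_arr C f" and g: "zero_arr C g" and d: "Dom C f = Dom C g" and c: "Cod C f = Cod C g"
  shows "f = g"
proof -
  obtain Z1 g1 h1 where Z1: "zero_obj C Z1" and g1: "g1 \<in> hom C (Dom C f) Z1" and h1: "h1 \<in> hom C Z1 (Cod C f)"
    and fe: "f = Comp C h1 g1" using f unfolding zero_arr_def by blast
  obtain Z2 g2 h2 where Z2: "zero_obj C Z2" and g2: "g2 \<in> hom C (Dom C f) Z2" and h2: "h2 \<in> hom C Z2 (Cod C f)"
    and ge: "g = Comp C h2 g2" using g d c unfolding zero_arr_def by auto
  have fA: "f \<in> Arr C" using f unfolding zero_arr_def by blast
  have Z2o: "Z2 \<in> Obj C" using Z2 unfolding zero_obj_def by blast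
  obtain i where i: "i \<in> hom C Z1 Z2" using zero_ex_from[OF Z1 Z2o] by blast
  have "Comp C h2 i = h1"
    using zero_unique_from[OF Z1 _ comph[OF i h2] h1] dc fA by blast
  moreover have "Comp C i g1 = g2"
    using zero_unique_to[OF Z2 _ comph[OF g1 i] g2] dc fA by blast
  moreover have "Comp C h2 (Comp C i g1) = Comp C (Comp C h2 i) g1"
    using assoc g1 i h2 by (auto simp: hom_def)
  ultimately show ?thesis using fe ge by simp
qed

lemma zero_arr_arr: "zero_arr C f \<Longrightarrow> f \<in> Arr C"
  unfolding zero_arr_def by blast

lemma zero_comp_left:
  assumes f: "zero_arr C f" and g: "g \<in> Arr C" and c: "Cod C f = Dom C g"
  shows "zero_arr C (Comp C g f)"
proof -
  obtain Z k h where Z: "zero_obj C Z" and k: "k \<in> hom C (Dom C f) Z" and h: "h \<in> hom C Z (Cod C f)"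
    and fe: "f = Comp C h k" using f unfolding zero_arr_def by blast
  have fA: "f \<in> Arr C" using f by (rule zero_arr_arr)
  have gh: "Comp C g h \<in> hom C Z (Cod C g)" using comph[OF h] g c by (auto simp: hom_def)
  have "Comp C g f = Comp C (Comp C g h) k" using fe assoc k h g c by (auto simp: hom_def)
  moreover have "Comp C g f \<in> hom C (Dom C f) (Cod C g)" using comp fA g c by blast
  ultimately show ?thesis unfolding zero_arr_def using Z k gh by (auto simp: hom_def)
qed

lemma zero_comp_right:
  assumes f: "zero_arr C f" and g: "g \<in> Arr C" and c: "Cod C g = Dom C f"
  shows "zero_arr C (Comp C f g)"
proof -
  obtain Z k h where Z: "zero_obj C Z" and k: "k \<in> hom C (Dom C f) Z" and h: "h \<in> hom C Z (Cod C f)"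
    and fe: "f = Comp C h k" using f unfolding zero_arr_def by blast
  have fA: "f \<in> Arr C" using f by (rule zero_arr_arr)
  have kg: "Comp C k g \<in> hom C (Dom C g) Z" using comph[OF _ k] g c by (auto simp: hom_def)
  have "Comp C f g = Comp C h (Comp C k g)" using fe assoc k h g c by (auto simp: hom_def)
  moreover have "Comp C f g \<in> hom C (Dom C g) (Cod C f)" using comp fA g c by blast
  ultimately show ?thesis unfolding zero_arr_def using Z kg h by (auto simp: hom_def)
qed

lemma zero_arr_ex:
  assumes Z: "zero_obj C Z" and X: "X \<in> Obj C" and Y: "Y \<in> Obj C"
  shows "\<exists>z. z \<in> hom C X Y \<and> zero_arr C z"
proof -
  obtain g where g: "g \<in> hom C X Z" using zero_ex_to[OF Z X] by blast
  obtain h where h: "h \<in> hom C Z Y" using zero_ex_from[OF Z Y] by blast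
  have "Comp C h g \<in> hom C X Y" using comph[OF g h] .
  then show ?thesis unfolding zero_arr_def using Z g h by (auto simp: hom_def)
qed

lemma zero_iso:
  assumes Z: "zero_obj C Z" and Z': "zero_obj C Z'"
  shows "isomorphic C Z Z'"
proof -
  have Zo: "Z \<in> Obj C" and Z'o: "Z' \<in> Obj C" using Z Z' unfolding zero_obj_def by auto
  obtain f where f: "f \<in> hom C Z Z'" using zero_ex_from[OF Z Z'o] by blast
  obtain g where g: "g \<in> hom C Z' Z" using zero_ex_from[OF Z' Zo] by blast
  have 1: "Comp C g f = Idm C Z" using zero_unique_from[OF Z Zo comph[OF f g] idm[OF Zo]] .
  have 2: "Comp C f g = Idm C Z'" using zero_unique_from[OF Z' Z'o comph[OF g f] idm[OF Z'o]] .
  show ?thesis unfolding isomorphic_def is_iso_def using f g 1 2 by (auto simp: hom_def)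
qed

lemma iso_refl: "X \<in> Obj C \<Longrightarrow> isomorphic C X X"
  unfolding isomorphic_def is_iso_def using idm idl
  by (metis homI)

lemma iso_sym: "isomorphic C X Y \<Longrightarrow> isomorphic C Y X"
  unfolding isomorphic_def is_iso_def hom_def by auto

end



lemma kernel_univ: "is_kernel C k f \<Longrightarrow> g \<in> Arr C \<Longrightarrow> Cod C g = Dom C f \<Longrightarrow> zero_arr C (Comp C f g) \<Longrightarrow>
        \<exists>!u. u \<in> hom C (Dom C g) (Dom C k) \<and> Comp C k u = g"
  unfolding is_kernel_def by simp
lemma cokernel_univ: "is_cokernel C c f \<Longrightarrow> g \<in> Arr C \<Longrightarrow> Dom C g = Cod C f \<Longrightarrow> zero_arr C (Comp C g f) \<Longrightarrow>
        \<exists>!u. u \<in> hom C (Cod C c) (Cod C g) \<and> Comp C u c = g"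
  unfolding is_cokernel_def by simp

lemma product_short_exact:
  assumes ab: "abelian C" and pr: "is_product C X Y P p1 p2"
  shows "short_exact C X P Y"
proof -
  have cat: "is_category C" using ab unfolding abelian_def by blast
  obtain Z where Z: "zero_obj C Z" using ab unfolding abelian_def by blast
  have p1: "p1 \<in> hom C P X" and p2: "p2 \<in> hom C P Y" using pr unfolding is_product_def by auto
  have Po: "P \<in> Obj C" and Xo: "X \<in> Obj C" and Yo: "Y \<in> Obj C" using dc[OF cat] p1 p2 by (auto simp: hom_def)
  have univ: "\<And>W f g. W \<in> Obj C \<Longrightarrow> f \<in> hom C W X \<Longrightarrow> g \<in> hom C W Y \<Longrightarrow>
        \<exists>!u. u \<in> hom C W P \<and> Comp C p1 u = f \<and> Comp C p2 u = g"
    using pr unfolding is_product_def by blast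
  obtain zXY where zXY: "zXY \<in> hom C X Y" "zero_arr C zXY" using zero_arr_ex[OF cat Z Xo Yo] by blast
  obtain zYX where zYX: "zYX \<in> hom C Y X" "zero_arr C zYX" using zero_arr_ex[OF cat Z Yo Xo] by blast
  obtain i1 where i1: "i1 \<in> hom C X P" "Comp C p1 i1 = Idm C X" "Comp C p2 i1 = zXY"
    using univ[OF Xo idm[OF cat Xo] zXY(1)] by blast
  obtain s where s: "s \<in> hom C Y P" "Comp C p1 s = zYX" "Comp C p2 s = Idm C Y"
    using univ[OF Yo zYX(1) idm[OF cat Yo]] by blast
  have ker: "is_kernel C i1 p2"
    unfolding is_kernel_def
  proof (intro conjI ballI impI)
    show "i1 \<in> Arr C" "p2 \<in> Arr C" "Cod C i1 = Dom C p2" using i1 p2 by (auto simp: hom_def)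
    show "zero_arr C (Comp C p2 i1)" using i1 zXY by simp
  next
    fix g assume g: "g \<in> Arr C" and gc: "Cod C g = Dom C p2 \<and> zero_arr C (Comp C p2 g)"
    have gh: "g \<in> hom C (Dom C g) P" using g gc p2 by (auto simp: hom_def)
    have Wo: "Dom C g \<in> Obj C" using dc[OF cat g] by blast
    define u where "u = Comp C p1 g"
    have u: "u \<in> hom C (Dom C g) X" unfolding u_def using comph[OF cat gh p1] .
    have iu: "Comp C i1 u \<in> hom C (Dom C g) P" using comph[OF cat u i1(1)] .
    have "Comp C p1 (Comp C i1 u) = Comp C (Comp C p1 i1) u"
      using assoc[OF cat] u i1(1) p1 by (auto simp: hom_def)
    also have "\<dots> = u" using i1(2) idl[OF cat] u by (auto simp: hom_def)
    finally have e1: "Comp C p1 (Comp C i1 u) = Comp C p1 g" unfolding u_def .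
    have "Comp C p2 (Comp C i1 u) = Comp C (Comp C p2 i1) u"
      using assoc[OF cat] u i1(1) p2 by (auto simp: hom_def)
    also have "\<dots> = Comp C zXY u" using i1(3) by simp
    also have "\<dots> = Comp C p2 g"
    proof (rule zero_arr_unique[OF cat])
      show "zero_arr C (Comp C zXY u)" using zero_comp_right[OF cat zXY(2)] u zXY(1) by (auto simp: hom_def)
      show "zero_arr C (Comp C p2 g)" using gc by blast
      have "Comp C zXY u \<in> hom C (Dom C g) Y" using comph[OF cat u zXY(1)] .
      moreover have "Comp C p2 g \<in> hom C (Dom C g) Y" using comph[OF cat gh p2] .
      ultimately show "Dom C (Comp C zXY u) = Dom C (Comp C p2 g)" "Cod C (Comp C zXY u) = Cod C (Comp C p2 g)"
        by (auto simp: hom_def)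
    qed
    finally have e2: "Comp C p2 (Comp C i1 u) = Comp C p2 g" .
    have "Comp C i1 u = g"
      using univ[OF Wo comph[OF cat gh p1] comph[OF cat gh p2]] iu e1 e2 gh by blast
    show "\<exists>!u. u \<in> hom C (Dom C g) (Dom C i1) \<and> Comp C i1 u = g"
    proof (rule ex1I[of _ u])
      show "u \<in> hom C (Dom C g) (Dom C i1) \<and> Comp C i1 u = g" using u \<open>Comp C i1 u = g\<close> i1 by (auto simp: hom_def)
    next
      fix v assume v: "v \<in> hom C (Dom C g) (Dom C i1) \<and> Comp C i1 v = g"
      have "Comp C p1 (Comp C i1 v) = Comp C (Comp C p1 i1) v"
        using assoc[OF cat] v i1(1) p1 by (auto simp: hom_def)
      also have "\<dots> = v"
      proof -
        have "v \<in> Arr C" "Cod C v = X" using v i1(1) by (auto simp: hom_def)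
        then show ?thesis using i1(2) idl[OF cat, of v] by metis
      qed
      finally show "v = u" unfolding u_def using v by simp
    qed
  qed
  have epi: "is_epi C p2"
    unfolding is_epi_def
  proof (intro conjI ballI impI)
    show "p2 \<in> Arr C" using p2 by (auto simp: hom_def)
  next
    fix g h assume g: "g \<in> Arr C" and h: "h \<in> Arr C"
      and c: "Dom C g = Cod C p2 \<and> Dom C h = Cod C p2 \<and> Cod C g = Cod C h \<and> Comp C g p2 = Comp C h p2"
    have p2Y: "Cod C p2 = Y" using p2 unfolding hom_def by blast
    have gY: "Dom C g = Y" and hY: "Dom C h = Y" using conjunct1[OF c] conjunct1[OF conjunct2[OF c]] p2Y by simp_all
    have sA: "s \<in> Arr C" "Dom C s = Y" "Cod C s = P" and p2A: "p2 \<in> Arr C" "Dom C p2 = P" "Cod C p2 = Y"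
      using s(1) p2 by (auto simp: hom_def)
    have 1: "Comp C (Comp C g p2) s = g"
      using assoc[OF cat sA(1) p2A(1) g] sA p2A gY s(3) idr[OF cat g] by metis
    have 2: "Comp C (Comp C h p2) s = h"
      using assoc[OF cat sA(1) p2A(1) h] sA p2A hY s(3) idr[OF cat h] by metis
    show "g = h" using 1 2 c by metis
  qed
  obtain h where h: "is_cokernel C p2 h" using ab epi unfolding abelian_def by blast
  have coker: "is_cokernel C p2 i1"
    unfolding is_cokernel_def
  proof (intro conjI ballI impI)
    show "p2 \<in> Arr C" "i1 \<in> Arr C" "Dom C p2 = Cod C i1" using i1 p2 by (auto simp: hom_def)
    show "zero_arr C (Comp C p2 i1)" using i1 zXY by simp
  next
    fix g assume g: "g \<in> Arr C" and gc: "Dom C g = Cod C i1 \<and> zero_arr C (Comp C g i1)"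
    have hA: "h \<in> Arr C" and hc: "Dom C p2 = Cod C h" and hz: "zero_arr C (Comp C p2 h)"
      using h unfolding is_cokernel_def by simp_all
    have "\<exists>!v. v \<in> hom C (Dom C h) (Dom C i1) \<and> Comp C i1 v = h"
      using kernel_univ[OF ker hA hc[symmetric] hz] .
    then obtain v where v: "v \<in> hom C (Dom C h) (Dom C i1)" "Comp C i1 v = h"
      using ex1_implies_ex by blast
    have "Comp C g h = Comp C (Comp C g i1) v"
      using v assoc[OF cat] g i1 gc by (auto simp: hom_def)
    moreover have "zero_arr C (Comp C (Comp C g i1) v)"
      using zero_comp_right[OF cat] gc v i1 g comp[OF cat] by (auto simp: hom_def)
    ultimately have "zero_arr C (Comp C g h)" by simp
    then show "\<exists>!u. u \<in> hom C (Cod C p2) (Cod C g) \<and> Comp C u p2 = g"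
      using cokernel_univ[OF h g] gc hc i1 p2 by (auto simp: hom_def)
  qed
  show ?thesis unfolding short_exact_def using i1(1) p2 ker coker by blast
qed




lemma groth_rel_E: "groth_rel C E A B \<Longrightarrow> set_mset A \<subseteq> E \<and> set_mset B \<subseteq> E"
  by (induction rule: groth_rel.induct) (auto simp: conflation_def)

lemma rel_add2: "groth_rel C E A A' \<Longrightarrow> groth_rel C E B B' \<Longrightarrow> groth_rel C E (A + B) (A' + B')"
proof -
  assume a: "groth_rel C E A A'" and b: "groth_rel C E B B'"
  have 1: "groth_rel C E (A + B) (A' + B)" using gr_add[OF a] groth_rel_E[OF b] by blast
  have "groth_rel C E (B + A') (B' + A')" using gr_add[OF b] groth_rel_E[OF a] by blast
  then have 2: "groth_rel C E (A' + B) (A' + B')" by (simp add: add.commute)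
  show ?thesis using gr_trans[OF 1 2] .
qed

lemma class_eq: "set_mset A \<subseteq> E \<Longrightarrow> groth_class C E A = groth_class C E B \<longleftrightarrow> groth_rel C E A B"
proof
  assume A: "set_mset A \<subseteq> E" and e: "groth_class C E A = groth_class C E B"
  have "A \<in> groth_class C E A" using gr_refl[OF A] by (simp add: groth_class_def)
  then have "A \<in> groth_class C E B" using e by simp
  then have "groth_rel C E B A" by (simp add: groth_class_def)
  then show "groth_rel C E A B" by (rule gr_sym)
next
  assume r: "groth_rel C E A B"
  show "groth_class C E A = groth_class C E B"
    unfolding groth_class_def using r gr_sym gr_trans by blast
qed

lemma GM_add_class:
  assumes A: "set_mset A \<subseteq> E" and B: "set_mset B \<subseteq> E"
  shows "GM_add C E (groth_class C E A) (groth_class C E B) = groth_class C E (A + B)"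
proof
  show "GM_add C E (groth_class C E A) (groth_class C E B) \<subseteq> groth_class C E (A + B)"
  proof
    fix D assume "D \<in> GM_add C E (groth_class C E A) (groth_class C E B)"
    then obtain A' B' where "groth_rel C E A A'" "groth_rel C E B B'" "groth_rel C E (A' + B') D"
      unfolding GM_add_def groth_class_def by blast
    then show "D \<in> groth_class C E (A + B)" unfolding groth_class_def
      using rel_add2 gr_trans by blast
  qed
next
  show "groth_class C E (A + B) \<subseteq> GM_add C E (groth_class C E A) (groth_class C E B)"
    unfolding GM_add_def groth_class_def using gr_refl[OF A] gr_refl[OF B] by blast
qed

lemma GM_mem: "c \<in> GM C E \<longleftrightarrow> (\<exists>A. set_mset A \<subseteq> E \<and> c = groth_class C E A)"
  unfolding GM_def by blast

lemma serre_sub: "serre C E S \<Longrightarrow> S \<subseteq> E"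
  unfolding serre_def by (elim conjE) assumption
lemma serre_isoA: "serre C E S \<Longrightarrow> \<forall>X\<in>S. \<forall>Y\<in>E. isomorphic C X Y \<longrightarrow> Y \<in> S"
  unfolding serre_def by (elim conjE) assumption
lemma serre_zero: "serre C E S \<Longrightarrow> \<exists>Z\<in>S. zero_obj C Z"
  unfolding serre_def by (elim conjE) assumption
lemma serre_prodA: "serre C E S \<Longrightarrow> \<forall>X\<in>S. \<forall>Y\<in>S. \<forall>P\<in>E. (\<exists>p1 p2. is_product C X Y P p1 p2) \<longrightarrow> P \<in> S"
  unfolding serre_def by (elim conjE) assumption
lemma serre_confA: "serre C E S \<Longrightarrow> \<forall>X Y Z. conflation C E X Y Z \<longrightarrow> (Y \<in> S \<longleftrightarrow> X \<in> S \<and> Z \<in> S)"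
  unfolding serre_def by (elim conjE) assumption

lemma serre_iso: "serre C E S \<Longrightarrow> X \<in> S \<Longrightarrow> Y \<in> E \<Longrightarrow> isomorphic C X Y \<Longrightarrow> Y \<in> S"
  using serre_isoA by blast
lemma serre_prod: "serre C E S \<Longrightarrow> X \<in> S \<Longrightarrow> Y \<in> S \<Longrightarrow> P \<in> E \<Longrightarrow> is_product C X Y P p1 p2 \<Longrightarrow> P \<in> S"
  using serre_prodA by blast
lemma serre_conf: "serre C E S \<Longrightarrow> conflation C E X Y Z \<Longrightarrow> (Y \<in> S \<longleftrightarrow> X \<in> S \<and> Z \<in> S)"
  using serre_confA by blast

context fixes C :: "('o,'a) cat" and E assumes ex: "exact_cat C E" begin

lemma ab: "abelian C"
  using ex unfolding exact_cat_def by (elim conjE) assumption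
lemma EObj: "E \<subseteq> Obj C"
  using ex unfolding exact_cat_def by (elim conjE) assumption
lemma zeroE: "\<exists>Z\<in>E. zero_obj C Z"
  using ex unfolding exact_cat_def by (elim conjE) assumption
lemma prodA: "\<forall>X\<in>E. \<forall>Y\<in>E. \<exists>P\<in>E. \<exists>p1 p2. is_product C X Y P p1 p2"
  using ex unfolding exact_cat_def by (elim conjE) assumption
lemma extA: "\<forall>X Y Z. short_exact C X Y Z \<and> X \<in> E \<and> Z \<in> E \<longrightarrow> Y \<in> E"
  using ex unfolding exact_cat_def by (elim conjE) assumption
lemma cat: "is_category C" using ab unfolding abelian_def by (elim conjE) assumption
lemma prodE: "X \<in> E \<Longrightarrow> Y \<in> E \<Longrightarrow> \<exists>P\<in>E. \<exists>p1 p2. is_product C X Y P p1 p2"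
  using prodA by blast

lemma serre_inv:
  assumes S: "serre C E S" and r: "groth_rel C E A B"
  shows "set_mset A \<subseteq> S \<longleftrightarrow> set_mset B \<subseteq> S"
  using r
proof (induction rule: groth_rel.induct)
  case (gr_iso X Y)
  have "X \<in> S \<longleftrightarrow> Y \<in> S"
    using serre_iso[OF S] gr_iso iso_sym[OF cat] by blast
  then show ?case by simp
next
  case (gr_zero Z)
  obtain Z' where Z': "Z' \<in> S" "zero_obj C Z'" using serre_zero[OF S] by blast
  have "isomorphic C Z' Z" using zero_iso[OF cat Z'(2) gr_zero(2)] .
  then have "Z \<in> S" using serre_iso[OF S] Z' gr_zero(1) by blast
  then show ?case by simp
next
  case (gr_conf X Y Z)
  then show ?case using serre_conf[OF S] by simp
qed auto

lemma prod_rel: "X \<in> E \<Longrightarrow> Y \<in> E \<Longrightarrow> is_product C X Y P p1 p2 \<Longrightarrow> P \<in> E \<Longrightarrow> groth_rel C E {#P#} {#X, Y#}"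
  by (rule gr_conf) (simp add: conflation_def product_short_exact[OF ab])

lemma rep:
  assumes T: "T \<subseteq> E" and Z: "\<exists>Z\<in>T. zero_obj C Z"
    and P: "\<And>x a. x \<in> T \<Longrightarrow> a \<in> T \<Longrightarrow> \<exists>P\<in>T. groth_rel C E {#P#} {#x, a#}"
  shows "set_mset A \<subseteq> T \<Longrightarrow> \<exists>x\<in>T. groth_rel C E {#x#} A"
proof (induction A)
  case empty
  obtain Z0 where Z0: "Z0 \<in> T" "zero_obj C Z0" using Z by blast
  then have "groth_rel C E {#Z0#} {#}" using T by (intro gr_zero) auto
  then show ?case using Z0 by blast
next
  case (add a A)
  then obtain x where x: "x \<in> T" "groth_rel C E {#x#} A" by auto
  have a: "a \<in> T" using add by simp
  obtain Q where Q: "Q \<in> T" "groth_rel C E {#Q#} {#x, a#}" using P[OF x(1) a] by blast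
  have "set_mset {#a#} \<subseteq> E" using a T by auto
  then have "groth_rel C E ({#x#} + {#a#}) (A + {#a#})" using gr_add[OF x(2)] by blast
  then have "groth_rel C E {#x, a#} (add_mset a A)" by (simp add: add_mset_commute)
  then have "groth_rel C E {#Q#} (add_mset a A)" using gr_trans[OF Q(2)] by blast
  then show ?case using Q(1) by blast
qed

lemma repE: "set_mset A \<subseteq> E \<Longrightarrow> \<exists>x\<in>E. groth_rel C E {#x#} A"
  apply (rule rep[of E])
  using zeroE prodE prod_rel by blast+

lemma repS: "serre C E S \<Longrightarrow> set_mset A \<subseteq> S \<Longrightarrow> \<exists>x\<in>S. groth_rel C E {#x#} A"
proof (rule rep[of S])
  assume S: "serre C E S"
  show "S \<subseteq> E" "\<exists>Z\<in>S. zero_obj C Z" using serre_sub[OF S] serre_zero[OF S] by blast+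
  fix x a assume "x \<in> S" "a \<in> S"
  moreover then have "x \<in> E" "a \<in> E" using serre_sub[OF S] by blast+
  moreover obtain P p1 p2 where "P \<in> E" "is_product C x a P p1 p2" using prodE calculation(3,4) by blast
  ultimately show "\<exists>P\<in>S. groth_rel C E {#P#} {#x, a#}"
    using serre_prod[OF S] prod_rel by blast
qed

lemma memMS:
  assumes S: "serre C E S" and A: "set_mset A \<subseteq> E"
  shows "groth_class C E A \<in> gcls C E ` S \<longleftrightarrow> set_mset A \<subseteq> S"
proof
  assume "groth_class C E A \<in> gcls C E ` S"
  then obtain x where x: "x \<in> S" "groth_class C E A = groth_class C E {#x#}" unfolding gcls_def by auto
  then have "groth_rel C E A {#x#}" using class_eq A by blast
  then show "set_mset A \<subseteq> S" using serre_inv[OF S] x(1) by auto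
next
  assume "set_mset A \<subseteq> S"
  then obtain x where x: "x \<in> S" "groth_rel C E {#x#} A" using repS[OF S] by blast
  have "x \<in> E" using serre_sub[OF S] x by blast
  then have "groth_class C E {#x#} = groth_class C E A" using class_eq[of "{#x#}" E C A] x(2) by simp
  then show "groth_class C E A \<in> gcls C E ` S" using x(1) unfolding gcls_def by force
qed

end



lemma diff_cancel: "A \<subseteq> M \<Longrightarrow> B \<subseteq> M \<Longrightarrow> M - A = M - B \<Longrightarrow> A = B"
  by (metis double_diff order_refl)

context fixes C :: "('o,'a) cat" and E assumes ex: "exact_cat C E" begin

lemma class_GM: "set_mset A \<subseteq> E \<Longrightarrow> groth_class C E A \<in> GM C E"
  unfolding GM_def by blast

lemma gcls_GM: "x \<in> E \<Longrightarrow> gcls C E x \<in> GM C E"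
  unfolding gcls_def using class_GM by simp

lemma GM_gcls: "c \<in> GM C E \<Longrightarrow> \<exists>x\<in>E. c = gcls C E x"
proof -
  assume "c \<in> GM C E"
  then obtain A where A: "set_mset A \<subseteq> E" "c = groth_class C E A" unfolding GM_def by blast
  obtain x where x: "x \<in> E" "groth_rel C E {#x#} A" using repE[OF ex A(1)] by blast
  have "groth_class C E {#x#} = groth_class C E A" using class_eq[of "{#x#}" E C A] x by simp
  then show ?thesis using A x unfolding gcls_def by auto
qed

lemma GM_cases: "c \<in> GM C E \<Longrightarrow> (\<And>A. set_mset A \<subseteq> E \<Longrightarrow> c = groth_class C E A \<Longrightarrow> P) \<Longrightarrow> P"
  unfolding GM_def by blast

lemma add_GM: "a \<in> GM C E \<Longrightarrow> b \<in> GM C E \<Longrightarrow> GM_add C E a b \<in> GM C E"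
  by (elim GM_cases) (simp add: GM_add_class class_GM)

lemma add_comm: "a \<in> GM C E \<Longrightarrow> b \<in> GM C E \<Longrightarrow> GM_add C E a b = GM_add C E b a"
  by (elim GM_cases) (simp add: GM_add_class add.commute)

lemma add_zero: "b \<in> GM C E \<Longrightarrow> GM_add C E (groth_class C E {#}) b = b"
  by (elim GM_cases) (simp add: GM_add_class)

lemma gcls_conf: "conflation C E X Y Z \<Longrightarrow> gcls C E Y = GM_add C E (gcls C E X) (gcls C E Z)"
proof -
  assume c: "conflation C E X Y Z"
  then have XYZ: "X \<in> E" "Y \<in> E" "Z \<in> E" unfolding conflation_def by simp_all
  have "groth_rel C E {#Y#} ({#X#} + {#Z#})" using gr_conf[OF c] by (simp add: add_mset_commute)
  then have "groth_class C E {#Y#} = groth_class C E ({#X#} + {#Z#})"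
    using class_eq[of "{#Y#}" E C] XYZ by simp
  then show ?thesis unfolding gcls_def using GM_add_class[of "{#X#}" E "{#Z#}" C] XYZ by simp
qed

lemma memS: "serre C E S \<Longrightarrow> x \<in> E \<Longrightarrow> gcls C E x \<in> gcls C E ` S \<longleftrightarrow> x \<in> S"
  using memMS[OF ex, of S "{#x#}"] unfolding gcls_def by simp

lemma gcls_S_GM: "serre C E S \<Longrightarrow> gcls C E ` S \<subseteq> GM C E"
  using gcls_GM serre_sub by blast

lemma Phi_prime:
  assumes S: "serre C E S"
  shows "prime_ideal (GM C E) (GM_add C E) (Phi C E S)"
  unfolding prime_ideal_def
proof (intro conjI ballI impI)
  show "Phi C E S \<subseteq> GM C E" unfolding Phi_def by blast
  have "groth_class C E {#} \<in> gcls C E ` S" using memMS[OF ex S, of "{#}"] by simp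
  moreover have "groth_class C E {#} \<in> GM C E" using class_GM by simp
  ultimately show "Phi C E S \<noteq> GM C E" unfolding Phi_def by blast
next
  fix x a assume x: "x \<in> Phi C E S" and a: "a \<in> GM C E"
  obtain A where A: "set_mset A \<subseteq> E" "x = groth_class C E A" using x unfolding Phi_def by (auto elim: GM_cases)
  obtain B where B: "set_mset B \<subseteq> E" "a = groth_class C E B" using a by (auto elim: GM_cases)
  have AB: "GM_add C E x a = groth_class C E (A + B)" using A B GM_add_class by simp
  have "\<not> set_mset A \<subseteq> S" using x A memMS[OF ex S A(1)] unfolding Phi_def by simp
  then have "\<not> set_mset (A + B) \<subseteq> S" by auto
  then show "GM_add C E x a \<in> Phi C E S" unfolding Phi_def AB
    using memMS[OF ex S, of "A + B"] A B class_GM[of "A + B"] by auto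
next
  fix x y assume x: "x \<in> GM C E" and y: "y \<in> GM C E" and xy: "GM_add C E x y \<in> Phi C E S"
  obtain A where A: "set_mset A \<subseteq> E" "x = groth_class C E A" using x by (auto elim: GM_cases)
  obtain B where B: "set_mset B \<subseteq> E" "y = groth_class C E B" using y by (auto elim: GM_cases)
  have AB: "GM_add C E x y = groth_class C E (A + B)" using A B GM_add_class by simp
  have "\<not> set_mset (A + B) \<subseteq> S" using xy AB memMS[OF ex S, of "A + B"] A B unfolding Phi_def by auto
  then have "\<not> set_mset A \<subseteq> S \<or> \<not> set_mset B \<subseteq> S" by auto
  then show "x \<in> Phi C E S \<or> y \<in> Phi C E S"
    using memMS[OF ex S A(1)] memMS[OF ex S B(1)] A B x y unfolding Phi_def by auto
qed

lemma Phi_inj: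
  assumes S: "serre C E S" and T: "serre C E T" and e: "Phi C E S = Phi C E T"
  shows "S = T"
proof -
  have "gcls C E ` S = gcls C E ` T"
    using diff_cancel[OF gcls_S_GM[OF S] gcls_S_GM[OF T]] e unfolding Phi_def by simp
  note e2 = this
  show ?thesis
  proof (intro equalityI subsetI)
    fix x assume x: "x \<in> S"
    have xE: "x \<in> E" using x serre_sub[OF S] by blast
    have "gcls C E x \<in> gcls C E ` T" using x e2 by blast
    then show "x \<in> T" using memS[OF T xE] by simp
  next
    fix x assume x: "x \<in> T"
    have xE: "x \<in> E" using x serre_sub[OF T] by blast
    have "gcls C E x \<in> gcls C E ` S" using x e2 by blast
    then show "x \<in> S" using memS[OF S xE] by simp
  qed
qed

definition Sp where "Sp p = {x \<in> E. gcls C E x \<notin> p}"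

lemma Phi_surj:
  assumes p: "prime_ideal (GM C E) (GM_add C E) p"
  shows "serre C E (Sp p)" and "Phi C E (Sp p) = p"
proof -
  have pM: "p \<subseteq> GM C E" and pne: "p \<noteq> GM C E"
    and idl: "\<And>x a. x \<in> p \<Longrightarrow> a \<in> GM C E \<Longrightarrow> GM_add C E x a \<in> p"
    and pr: "\<And>x y. x \<in> GM C E \<Longrightarrow> y \<in> GM C E \<Longrightarrow> GM_add C E x y \<in> p \<Longrightarrow> x \<in> p \<or> y \<in> p"
    using p unfolding prime_ideal_def by simp_all
  have split: "\<And>x y. x \<in> GM C E \<Longrightarrow> y \<in> GM C E \<Longrightarrow> GM_add C E x y \<in> p \<longleftrightarrow> x \<in> p \<or> y \<in> p"
  proof
    fix x y assume x: "x \<in> GM C E" and y: "y \<in> GM C E"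
    show "GM_add C E x y \<in> p \<Longrightarrow> x \<in> p \<or> y \<in> p" using pr[OF x y] .
    show "x \<in> p \<or> y \<in> p \<Longrightarrow> GM_add C E x y \<in> p"
    proof -
      assume "x \<in> p \<or> y \<in> p"
      then show ?thesis
      proof
        assume "x \<in> p" then show ?thesis using idl y by blast
      next
        assume "y \<in> p" then have "GM_add C E y x \<in> p" using idl x by blast
        then show ?thesis using add_comm[OF x y] by simp
      qed
    qed
  qed
  have z: "groth_class C E {#} \<notin> p"
  proof
    assume "groth_class C E {#} \<in> p"
    note z0 = this
    have "GM C E \<subseteq> p"
    proof
      fix b assume b: "b \<in> GM C E"
      have "GM_add C E (groth_class C E {#}) b \<in> p" using idl[OF z0 b] .
      then show "b \<in> p" using add_zero[OF b] by simp
    qed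
    then show False using pM pne by blast
  qed
  show "serre C E (Sp p)"
    unfolding serre_def
  proof (intro conjI ballI impI allI)
    show "Sp p \<subseteq> E" unfolding Sp_def by blast
  next
    fix X Y assume X: "X \<in> Sp p" and Y: "Y \<in> E" and i: "isomorphic C X Y"
    have XE: "X \<in> E" using X unfolding Sp_def by simp
    have "groth_rel C E {#X#} {#Y#}" using gr_iso[OF XE Y i] .
    then have "gcls C E X = gcls C E Y" unfolding gcls_def using class_eq[of "{#X#}" E C] XE
      by simp
    then show "Y \<in> Sp p" using X Y unfolding Sp_def by auto
  next
    obtain Z where Z: "Z \<in> E" "zero_obj C Z" using zeroE[OF ex] by blast
    have "gcls C E Z = groth_class C E {#}" unfolding gcls_def
      using class_eq[of "{#Z#}" E C "{#}"] gr_zero[OF Z] Z by simp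
    then have "Z \<in> Sp p" using z Z unfolding Sp_def by simp
    then show "\<exists>Z\<in>Sp p. zero_obj C Z" using Z by blast
  next
    fix X Y P assume X: "X \<in> Sp p" and Y: "Y \<in> Sp p" and P: "P \<in> E"
      and pp: "\<exists>p1 p2. is_product C X Y P p1 p2"
    have XE: "X \<in> E" "Y \<in> E" using X Y unfolding Sp_def by auto
    obtain p1 p2 where pp: "is_product C X Y P p1 p2" using pp by blast
    have "conflation C E X P Y" unfolding conflation_def
      using XE P product_short_exact[OF ab[OF ex] pp] by simp
    then have "gcls C E P = GM_add C E (gcls C E X) (gcls C E Y)" by (rule gcls_conf)
    then show "P \<in> Sp p" using split[OF gcls_GM[OF XE(1)] gcls_GM[OF XE(2)]] X Y P unfolding Sp_def by auto
  next
    fix X Y Z assume c: "conflation C E X Y Z"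
    then have XYZ: "X \<in> E" "Y \<in> E" "Z \<in> E" unfolding conflation_def by simp_all
    have "gcls C E Y = GM_add C E (gcls C E X) (gcls C E Z)" using c by (rule gcls_conf)
    then show "Y \<in> Sp p \<longleftrightarrow> X \<in> Sp p \<and> Z \<in> Sp p"
      using split[OF gcls_GM[OF XYZ(1)] gcls_GM[OF XYZ(3)]] XYZ unfolding Sp_def by auto
  qed
  show "Phi C E (Sp p) = p"
  proof
    show "Phi C E (Sp p) \<subseteq> p"
    proof
      fix c assume c: "c \<in> Phi C E (Sp p)"
      then obtain x where x: "x \<in> E" "c = gcls C E x" using GM_gcls unfolding Phi_def by blast
      show "c \<in> p" using c x unfolding Phi_def Sp_def by auto
    qed
    show "p \<subseteq> Phi C E (Sp p)"
      using pM unfolding Phi_def Sp_def by auto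
  qed
qed

end



lemma istop_M:
  fixes M :: "'m set" and add
  assumes comm: "\<And>a b. a \<in> M \<Longrightarrow> b \<in> M \<Longrightarrow> add a b = add b a"
    and cl: "\<And>a b. a \<in> M \<Longrightarrow> b \<in> M \<Longrightarrow> add a b \<in> M"
  shows "istopology (\<lambda>U. \<exists>S \<subseteq> M. U = MSpec M add - mspec_V M add S)"
  unfolding istopology_def
proof (intro conjI allI impI ballI)
  fix U W assume "\<exists>S \<subseteq> M. U = MSpec M add - mspec_V M add S" "\<exists>S \<subseteq> M. W = MSpec M add - mspec_V M add S"
  then obtain S T where S: "S \<subseteq> M" "U = MSpec M add - mspec_V M add S"
    and T: "T \<subseteq> M" "W = MSpec M add - mspec_V M add T" by blast
  define R where "R = {add a b | a b. a \<in> S \<and> b \<in> T}"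
  have RM: "R \<subseteq> M" unfolding R_def using S T cl by blast
  have "U \<inter> W = MSpec M add - mspec_V M add R"
  proof (intro equalityI subsetI)
    fix p assume p: "p \<in> U \<inter> W"
    then have pm: "p \<in> MSpec M add" and nS: "\<not> S \<subseteq> p" and nT: "\<not> T \<subseteq> p"
      using S T unfolding mspec_V_def by auto
    have pr: "prime_ideal M add p" using pm unfolding MSpec_def by simp
    obtain a where a: "a \<in> S" "a \<notin> p" using nS by blast
    obtain b where b: "b \<in> T" "b \<notin> p" using nT by blast
    have "add a b \<notin> p" using pr a b S T unfolding prime_ideal_def by blast
    moreover have "add a b \<in> R" unfolding R_def using a b by blast
    ultimately show "p \<in> MSpec M add - mspec_V M add R" using pm unfolding mspec_V_def by blast
  next
    fix p assume p: "p \<in> MSpec M add - mspec_V M add R"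
    then have pm: "p \<in> MSpec M add" and nR: "\<not> R \<subseteq> p" unfolding mspec_V_def by auto
    have pr: "prime_ideal M add p" using pm unfolding MSpec_def by simp
    then have idl: "\<And>x a. x \<in> p \<Longrightarrow> a \<in> M \<Longrightarrow> add x a \<in> p" unfolding prime_ideal_def by blast
    obtain a b where ab: "a \<in> S" "b \<in> T" "add a b \<notin> p" using nR unfolding R_def by blast
    have "\<not> S \<subseteq> p" using idl ab S T by blast
    moreover have "\<not> T \<subseteq> p"
    proof
      assume "T \<subseteq> p"
      then have "add b a \<in> p" using idl ab S T by blast
      then show False using comm ab S T by (metis subsetD)
    qed
    ultimately show "p \<in> U \<inter> W" using S T pm unfolding mspec_V_def by blast
  qed
  then show "\<exists>S \<subseteq> M. U \<inter> W = MSpec M add - mspec_V M add S" using RM by blast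
next
  fix K assume K: "\<forall>U\<in>K. \<exists>S \<subseteq> M. U = MSpec M add - mspec_V M add S"
  define SK where "SK = \<Union>{S. S \<subseteq> M \<and> MSpec M add - mspec_V M add S \<in> K}"
  have SKM: "SK \<subseteq> M" unfolding SK_def by blast
  have "\<Union>K = MSpec M add - mspec_V M add SK"
  proof (intro equalityI subsetI)
    fix p assume "p \<in> \<Union>K"
    then obtain U where U: "U \<in> K" "p \<in> U" by blast
    obtain S where S: "S \<subseteq> M" "U = MSpec M add - mspec_V M add S" using K U by blast
    have "S \<subseteq> SK" unfolding SK_def using S U by blast
    then show "p \<in> MSpec M add - mspec_V M add SK" using U S unfolding mspec_V_def by blast
  next
    fix p assume p: "p \<in> MSpec M add - mspec_V M add SK"
    then have pm: "p \<in> MSpec M add" and "\<not> SK \<subseteq> p" unfolding mspec_V_def by auto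
    then obtain S where S: "S \<subseteq> M" "MSpec M add - mspec_V M add S \<in> K" "\<not> S \<subseteq> p"
      unfolding SK_def by blast
    have "p \<in> MSpec M add - mspec_V M add S" using pm S unfolding mspec_V_def by blast
    then show "p \<in> \<Union>K" using S by blast
  qed
  then show "\<exists>S \<subseteq> M. \<Union>K = MSpec M add - mspec_V M add S" using SKM by blast
qed

lemma istop_S_union:
  assumes K: "\<forall>U\<in>K. \<exists>X. iso_closed C E X \<and> U = Serre C E - serre_V C E X"
  shows "\<exists>X. iso_closed C E X \<and> \<Union>K = Serre C E - serre_V C E X"
proof -
  define XK where "XK = \<Union>{X. iso_closed C E X \<and> Serre C E - serre_V C E X \<in> K}"
  have ic: "iso_closed C E XK" unfolding XK_def iso_closed_def by blast
  have "\<Union>K = Serre C E - serre_V C E XK"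
  proof (intro equalityI subsetI)
    fix T assume "T \<in> \<Union>K"
    then obtain U where U: "U \<in> K" "T \<in> U" by blast
    obtain X where X: "iso_closed C E X" "U = Serre C E - serre_V C E X" using K U by blast
    have "X \<subseteq> XK" unfolding XK_def using X U by blast
    then show "T \<in> Serre C E - serre_V C E XK" using U X unfolding serre_V_def by blast
  next
    fix T assume T: "T \<in> Serre C E - serre_V C E XK"
    then have Ts: "T \<in> Serre C E" and "T \<inter> XK \<noteq> {}" unfolding serre_V_def by auto
    then obtain X where X: "iso_closed C E X" "Serre C E - serre_V C E X \<in> K" "T \<inter> X \<noteq> {}"
      unfolding XK_def by blast
    have "T \<in> Serre C E - serre_V C E X" using Ts X unfolding serre_V_def by blast
    then show "T \<in> \<Union>K" using X by blast
  qed
  then show ?thesis using ic by blast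
qed

context fixes C :: "('o,'a) cat" and E assumes ex: "exact_cat C E" begin

lemma istop_S_int:
  assumes X: "iso_closed C E X" and Y: "iso_closed C E Y"
  shows "\<exists>W. iso_closed C E W \<and>
    (Serre C E - serre_V C E X) \<inter> (Serre C E - serre_V C E Y) = Serre C E - serre_V C E W"
proof -
  define W where "W = {w \<in> E. \<exists>x\<in>X. \<exists>y\<in>Y. groth_rel C E {#w#} {#x, y#}}"
  have XE: "X \<subseteq> E" and YE: "Y \<subseteq> E" using X Y unfolding iso_closed_def by auto
  have ic: "iso_closed C E W" unfolding iso_closed_def
  proof (intro conjI ballI impI)
    show "W \<subseteq> E" unfolding W_def by blast
  next
    fix A B assume A: "A \<in> W" and B: "B \<in> E" and i: "isomorphic C A B"
    obtain x y where xy: "x \<in> X" "y \<in> Y" "groth_rel C E {#A#} {#x, y#}" and AE: "A \<in> E"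
      using A unfolding W_def by blast
    have "groth_rel C E {#B#} {#A#}" using gr_sym[OF gr_iso[OF AE B i]] .
    then have "groth_rel C E {#B#} {#x, y#}" using gr_trans xy(3) by blast
    then show "B \<in> W" unfolding W_def using B xy by blast
  qed
  have "(Serre C E - serre_V C E X) \<inter> (Serre C E - serre_V C E Y) = Serre C E - serre_V C E W"
  proof (intro equalityI subsetI)
    fix T assume T: "T \<in> (Serre C E - serre_V C E X) \<inter> (Serre C E - serre_V C E Y)"
    then have Ts: "serre C E T" and "T \<inter> X \<noteq> {}" "T \<inter> Y \<noteq> {}" unfolding serre_V_def Serre_def by auto
    then obtain x y where x: "x \<in> T" "x \<in> X" and y: "y \<in> T" "y \<in> Y" by blast
    have xyE: "x \<in> E" "y \<in> E" using x y XE YE by auto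
    obtain P p1 p2 where P: "P \<in> E" "is_product C x y P p1 p2" using prodE[OF ex xyE] by blast
    have "P \<in> T" using serre_prod[OF Ts x(1) y(1) P] .
    moreover have "groth_rel C E {#P#} {#x, y#}" using prod_rel[OF ex xyE P(2) P(1)] .
    ultimately have "P \<in> T \<inter> W" unfolding W_def using P x y by blast
    then show "T \<in> Serre C E - serre_V C E W" using T unfolding serre_V_def by blast
  next
    fix T assume T: "T \<in> Serre C E - serre_V C E W"
    then have Ts: "serre C E T" and "T \<inter> W \<noteq> {}" unfolding serre_V_def Serre_def by auto
    then obtain w where w: "w \<in> T" "w \<in> W" by blast
    then obtain x y where xy: "x \<in> X" "y \<in> Y" "groth_rel C E {#w#} {#x, y#}" unfolding W_def by blast
    have "set_mset {#x, y#} \<subseteq> T" using serre_inv[OF ex Ts xy(3)] w by simp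
    then have "x \<in> T" "y \<in> T" by auto
    then show "T \<in> (Serre C E - serre_V C E X) \<inter> (Serre C E - serre_V C E Y)"
      using T xy unfolding serre_V_def by blast
  qed
  then show ?thesis using ic by blast
qed

lemma istop_S: "istopology (\<lambda>U. \<exists>X. iso_closed C E X \<and> U = Serre C E - serre_V C E X)"
  unfolding istopology_def
proof (intro conjI allI impI)
  fix U W assume "\<exists>X. iso_closed C E X \<and> U = Serre C E - serre_V C E X"
    "\<exists>X. iso_closed C E X \<and> W = Serre C E - serre_V C E X"
  then obtain X Y where "iso_closed C E X" "U = Serre C E - serre_V C E X"
    "iso_closed C E Y" "W = Serre C E - serre_V C E Y" by blast
  then show "\<exists>X. iso_closed C E X \<and> U \<inter> W = Serre C E - serre_V C E X"
    using istop_S_int by simp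
next
  fix K assume "\<forall>U\<in>K. \<exists>X. iso_closed C E X \<and> U = Serre C E - serre_V C E X"
  then show "\<exists>X. iso_closed C E X \<and> \<Union>K = Serre C E - serre_V C E X" by (rule istop_S_union)
qed

lemma openS: "openin (serre_zariski C E) U \<longleftrightarrow> (\<exists>X. iso_closed C E X \<and> U = Serre C E - serre_V C E X)"
  unfolding serre_zariski_def using istop_S by simp

lemma openM: "openin (mspec_zariski (GM C E) (GM_add C E)) U \<longleftrightarrow>
    (\<exists>S \<subseteq> GM C E. U = MSpec (GM C E) (GM_add C E) - mspec_V (GM C E) (GM_add C E) S)"
proof -
  have "istopology (\<lambda>U. \<exists>S \<subseteq> GM C E. U = MSpec (GM C E) (GM_add C E) - mspec_V (GM C E) (GM_add C E) S)"
    by (rule istop_M[OF add_comm[OF ex] add_GM[OF ex]])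
  then show ?thesis unfolding mspec_zariski_def by simp
qed

lemma topS: "topspace (serre_zariski C E) = Serre C E"
proof -
  have ic: "iso_closed C E E" unfolding iso_closed_def by blast
  have "Serre C E - serre_V C E E = Serre C E"
  proof -
    have "\<And>T. T \<in> Serre C E \<Longrightarrow> T \<inter> E \<noteq> {}"
    proof -
      fix T assume "T \<in> Serre C E"
      then have Ts: "serre C E T" unfolding Serre_def by simp
      obtain Z where "Z \<in> T" "zero_obj C Z" using serre_zero[OF Ts] by blast
      then show "T \<inter> E \<noteq> {}" using serre_sub[OF Ts] by blast
    qed
    then show ?thesis unfolding serre_V_def by blast
  qed
  then have "openin (serre_zariski C E) (Serre C E)" using openS ic by metis
  then have "Serre C E \<subseteq> topspace (serre_zariski C E)" by (rule openin_subset)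
  moreover have "topspace (serre_zariski C E) \<subseteq> Serre C E"
    unfolding topspace_def using openS by blast
  ultimately show ?thesis by blast
qed

lemma topM: "topspace (mspec_zariski (GM C E) (GM_add C E)) = MSpec (GM C E) (GM_add C E)"
proof -
  have "MSpec (GM C E) (GM_add C E) - mspec_V (GM C E) (GM_add C E) (GM C E) = MSpec (GM C E) (GM_add C E)"
    unfolding mspec_V_def MSpec_def prime_ideal_def by blast
  then have "openin (mspec_zariski (GM C E) (GM_add C E)) (MSpec (GM C E) (GM_add C E))"
    using openM by (metis order_refl)
  then have "MSpec (GM C E) (GM_add C E) \<subseteq> topspace (mspec_zariski (GM C E) (GM_add C E))" by (rule openin_subset)
  moreover have "topspace (mspec_zariski (GM C E) (GM_add C E)) \<subseteq> MSpec (GM C E) (GM_add C E)"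
    unfolding topspace_def using openM by blast
  ultimately show ?thesis by blast
qed

end



context fixes C :: "('o,'a) cat" and E assumes ex: "exact_cat C E" begin

lemma Phi_MSpec: "T \<in> Serre C E \<Longrightarrow> Phi C E T \<in> MSpec (GM C E) (GM_add C E)"
  using Phi_prime[OF ex] unfolding Serre_def MSpec_def by simp

lemma pre_eq:
  assumes S: "S \<subseteq> GM C E" and T: "T \<in> Serre C E"
  shows "Phi C E T \<in> MSpec (GM C E) (GM_add C E) - mspec_V (GM C E) (GM_add C E) S \<longleftrightarrow>
         T \<inter> {x \<in> E. gcls C E x \<in> S} \<noteq> {}"
proof -
  have Ts: "serre C E T" using T unfolding Serre_def by simp
  have "Phi C E T \<in> MSpec (GM C E) (GM_add C E) - mspec_V (GM C E) (GM_add C E) S \<longleftrightarrow> \<not> S \<subseteq> Phi C E T"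
    using Phi_MSpec[OF T] unfolding mspec_V_def by blast
  also have "\<dots> \<longleftrightarrow> (\<exists>c\<in>S. c \<in> gcls C E ` T)" using S unfolding Phi_def by blast
  also have "\<dots> \<longleftrightarrow> T \<inter> {x \<in> E. gcls C E x \<in> S} \<noteq> {}" using serre_sub[OF Ts] by blast
  finally show ?thesis .
qed

lemma img_eq:
  assumes X: "X \<subseteq> E" and T: "T \<in> Serre C E"
  shows "Phi C E T \<in> mspec_V (GM C E) (GM_add C E) (gcls C E ` X) \<longleftrightarrow> T \<inter> X = {}"
proof -
  have Ts: "serre C E T" using T unfolding Serre_def by simp
  have "Phi C E T \<in> mspec_V (GM C E) (GM_add C E) (gcls C E ` X) \<longleftrightarrow> gcls C E ` X \<subseteq> Phi C E T"
    using Phi_MSpec[OF T] unfolding mspec_V_def by blast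
  also have "\<dots> \<longleftrightarrow> (\<forall>x\<in>X. gcls C E x \<notin> gcls C E ` T)" using X gcls_GM[OF ex] unfolding Phi_def by blast
  also have "\<dots> \<longleftrightarrow> (\<forall>x\<in>X. x \<notin> T)" using memS[OF ex Ts] X by blast
  finally show ?thesis by blast
qed

lemma Phi_image: "Phi C E ` Serre C E = MSpec (GM C E) (GM_add C E)"
proof (intro equalityI subsetI)
  fix p assume "p \<in> Phi C E ` Serre C E" then show "p \<in> MSpec (GM C E) (GM_add C E)" using Phi_MSpec by blast
next
  fix p assume "p \<in> MSpec (GM C E) (GM_add C E)"
  then have p: "prime_ideal (GM C E) (GM_add C E) p" unfolding MSpec_def by simp
  have "Sp C E p \<in> Serre C E" using Phi_surj(1)[OF ex p] unfolding Serre_def by simp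
  then show "p \<in> Phi C E ` Serre C E" using Phi_surj(2)[OF ex p] by force
qed

lemma Phi_inj_on: "inj_on (Phi C E) (Serre C E)"
  unfolding inj_on_def Serre_def using Phi_inj[OF ex] by blast

lemma homeo: "homeomorphic_map (serre_zariski C E) (mspec_zariski (GM C E) (GM_add C E)) (Phi C E)"
  unfolding homeomorphic_map_def quotient_map_def topS[OF ex] topM[OF ex]
proof (intro conjI allI impI Phi_image Phi_inj_on)
  fix U assume U: "U \<subseteq> MSpec (GM C E) (GM_add C E)"
  show "openin (serre_zariski C E) {x \<in> Serre C E. Phi C E x \<in> U} \<longleftrightarrow> openin (mspec_zariski (GM C E) (GM_add C E)) U"
  proof
    assume "openin (serre_zariski C E) {x \<in> Serre C E. Phi C E x \<in> U}"
    then obtain X where X: "iso_closed C E X" "{x \<in> Serre C E. Phi C E x \<in> U} = Serre C E - serre_V C E X"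
      using openS[OF ex] by blast
    have XE: "X \<subseteq> E" using X unfolding iso_closed_def by blast
    have gX: "gcls C E ` X \<subseteq> GM C E" using XE gcls_GM[OF ex] by blast
    have "U = MSpec (GM C E) (GM_add C E) - mspec_V (GM C E) (GM_add C E) (gcls C E ` X)"
    proof (intro equalityI subsetI)
      fix p assume p: "p \<in> U"
      then obtain T where T: "T \<in> Serre C E" "p = Phi C E T" using U Phi_image by blast
      then have "T \<in> Serre C E - serre_V C E X" using X(2) p by blast
      then have "T \<inter> X \<noteq> {}" unfolding serre_V_def by blast
      then show "p \<in> MSpec (GM C E) (GM_add C E) - mspec_V (GM C E) (GM_add C E) (gcls C E ` X)"
        using img_eq[OF XE T(1)] T Phi_MSpec by blast
    next
      fix p assume p: "p \<in> MSpec (GM C E) (GM_add C E) - mspec_V (GM C E) (GM_add C E) (gcls C E ` X)"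
      then obtain T where T: "T \<in> Serre C E" "p = Phi C E T" using Phi_image by blast
      then have "T \<inter> X \<noteq> {}" using img_eq[OF XE T(1)] p by blast
      then have "T \<in> Serre C E - serre_V C E X" using T unfolding serre_V_def by blast
      then show "p \<in> U" using X(2) T by blast
    qed
    then show "openin (mspec_zariski (GM C E) (GM_add C E)) U" using openM[OF ex] gX by blast
  next
    assume "openin (mspec_zariski (GM C E) (GM_add C E)) U"
    then obtain S where S: "S \<subseteq> GM C E" "U = MSpec (GM C E) (GM_add C E) - mspec_V (GM C E) (GM_add C E) S"
      using openM[OF ex] by blast
    define X where "X = {x \<in> E. gcls C E x \<in> S}"
    have ic: "iso_closed C E X" unfolding iso_closed_def
    proof (intro conjI ballI impI)
      show "X \<subseteq> E" unfolding X_def by blast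
    next
      fix A B assume A: "A \<in> X" and B: "B \<in> E" and i: "isomorphic C A B"
      have AE: "A \<in> E" using A unfolding X_def by simp
      have "gcls C E A = gcls C E B" unfolding gcls_def using class_eq[of "{#A#}" E C] gr_iso[OF AE B i] AE by simp
      then show "B \<in> X" using A B unfolding X_def by simp
    qed
    have "{x \<in> Serre C E. Phi C E x \<in> U} = Serre C E - serre_V C E X"
      using pre_eq[OF S(1)] S(2) unfolding serre_V_def X_def by blast
    then show "openin (serre_zariski C E) {x \<in> Serre C E. Phi C E x \<in> U}" using openS[OF ex] ic by blast
  qed
qed

lemma U_open: assumes X: "X \<in> E" shows "openin (serre_zariski C E) (U_obj C E X)"
proof -
  define I where "I = {Y \<in> E. \<forall>T\<in>Serre C E. X \<in> T \<longleftrightarrow> Y \<in> T}"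
  have ic: "iso_closed C E I" unfolding iso_closed_def
  proof (intro conjI ballI impI)
    show "I \<subseteq> E" unfolding I_def by blast
  next
    fix A B assume A: "A \<in> I" and B: "B \<in> E" and i: "isomorphic C A B"
    have AE: "A \<in> E" using A unfolding I_def by simp
    have i2: "isomorphic C B A" using iso_sym[OF cat[OF ex] i] .
    have "\<And>T. T \<in> Serre C E \<Longrightarrow> A \<in> T \<longleftrightarrow> B \<in> T"
      unfolding Serre_def using serre_iso[of C E _ A B] serre_iso[of C E _ B A] B AE i i2 by auto
    then show "B \<in> I" using A B unfolding I_def by auto
  qed
  have "U_obj C E X = Serre C E - serre_V C E I"
  proof (intro equalityI subsetI)
    fix T assume "T \<in> U_obj C E X"
    then have "T \<in> Serre C E" "X \<in> T" unfolding U_obj_def by auto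
    moreover have "X \<in> I" unfolding I_def using X by blast
    ultimately show "T \<in> Serre C E - serre_V C E I" unfolding serre_V_def by blast
  next
    fix T assume "T \<in> Serre C E - serre_V C E I"
    then have "T \<in> Serre C E" "T \<inter> I \<noteq> {}" unfolding serre_V_def by auto
    then show "T \<in> U_obj C E X" unfolding U_obj_def I_def by blast
  qed
  then show ?thesis using openS[OF ex] ic by blast
qed

lemma basis: "openin (serre_zariski C E) = arbitrary union_of (\<lambda>V. \<exists>X\<in>E. V = U_obj C E X)"
proof (rule ext)
  fix U
  show "openin (serre_zariski C E) U = (arbitrary union_of (\<lambda>V. \<exists>X\<in>E. V = U_obj C E X)) U"
  proof
    assume "openin (serre_zariski C E) U"
    then obtain X where X: "iso_closed C E X" "U = Serre C E - serre_V C E X" using openS[OF ex] by blast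
    have XE: "X \<subseteq> E" using X unfolding iso_closed_def by blast
    have "\<Union>(U_obj C E ` X) = U" unfolding X(2) U_obj_def serre_V_def by blast
    moreover have "U_obj C E ` X \<subseteq> Collect (\<lambda>V. \<exists>X\<in>E. V = U_obj C E X)" using XE by blast
    ultimately show "(arbitrary union_of (\<lambda>V. \<exists>X\<in>E. V = U_obj C E X)) U"
      unfolding union_of_def arbitrary_def by blast
  next
    assume "(arbitrary union_of (\<lambda>V. \<exists>X\<in>E. V = U_obj C E X)) U"
    then obtain \<U> where u: "\<U> \<subseteq> Collect (\<lambda>V. \<exists>X\<in>E. V = U_obj C E X)" "\<Union>\<U> = U"
      unfolding union_of_def by blast
    have "\<And>V. V \<in> \<U> \<Longrightarrow> openin (serre_zariski C E) V" using u(1) U_open by blast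
    then show "openin (serre_zariski C E) U" using u(2) openin_Union by blast
  qed
qed

lemma spec:
  assumes S: "S \<in> Serre C E" and T: "T \<in> Serre C E"
  shows "S \<in> serre_zariski C E closure_of {T} \<longleftrightarrow> S \<subseteq> T"
proof
  assume c: "S \<in> serre_zariski C E closure_of {T}"
  show "S \<subseteq> T"
  proof
    fix x assume x: "x \<in> S"
    have xE: "x \<in> E" using x S serre_sub unfolding Serre_def by blast
    have "S \<in> U_obj C E x" using S x unfolding U_obj_def by blast
    then have "T \<in> U_obj C E x" using c U_open[OF xE] unfolding closure_of_def by blast
    then show "x \<in> T" unfolding U_obj_def by blast
  qed
next
  assume st: "S \<subseteq> T"
  have "\<And>U. S \<in> U \<Longrightarrow> openin (serre_zariski C E) U \<Longrightarrow> T \<in> U"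
  proof -
    fix U assume "S \<in> U" "openin (serre_zariski C E) U"
    then obtain X where X: "U = Serre C E - serre_V C E X" "S \<in> U" using openS[OF ex] by blast
    then show "T \<in> U" using st T unfolding serre_V_def by blast
  qed
  then show "S \<in> serre_zariski C E closure_of {T}" unfolding closure_of_def topS[OF ex] using S by blast
qed

end

theorem mainTheorem15:
  fixes C :: "('o, 'a) cat" and E :: "'o set"
  assumes "exact_cat C E"
  shows "homeomorphic_map (serre_zariski C E) (mspec_zariski (GM C E) (GM_add C E)) (Phi C E) \<and>
         openin (serre_zariski C E) = arbitrary union_of (\<lambda>V. \<exists>X\<in>E. V = U_obj C E X) \<and>
         (\<forall>S\<in>Serre C E. \<forall>T\<in>Serre C E.
           S \<in> serre_zariski C E closure_of {T} \<longleftrightarrow> S \<subseteq> T)"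
  using homeo[OF assms] basis[OF assms] spec[OF assms] by blast


end
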